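(* Up to multiplication by a positive integer, every basic weight of a basic system of type $C$ is one of the following (coordinates $\lambda_k=\langle\lambda,e_k\rangle$): (1) $(C_2,1,1)$: $(0,1)$; (2) $(C_2,1,2)$: $(1,1)$, $(-1,1)$; (3) $(C_2,2,1)$: $(1,0)$, $(0,-1)$; (4) $(C_2,2,2)$: $(1,-1)$; (5) $(C_3,2,2)$: $(1,0,1)$, $(0,-1,1)$; (6) $(C_3,2,3)$: $(1,-1,1)$; (7) $(C_3,3,2)$: $(1,0,-1)$; (8) $(C_4,3,3)$: $(1,0,-1,1)$.
   Context: $C_n$ is realized in $\mathbb R^n$ with orthonormal basis $e_1,\dots,e_n$ and standard inner product, simple roots $\alpha_k=e_k-e_{k+1}$ ($k<n$), $\alpha_n=2e_n$. Let $W$ be the Weyl group, $\alpha^\vee=2\alpha/\langle\alpha,\alpha\rangle$. A weight is integral if $\langle\lambda,\alpha^\vee\rangle\in\mathbb Z$ for all roots $\alpha$; $\overline\lambda$ is the dominant weight in $W\lambda$. For $I=\Delta\setminus\{\alpha_i\}$, $J=\Delta\setminus\{\alpha_j\}$, a basic weight of $(\Phi,i,j)$ is an integral $\lambda$ with $\langle\lambda,\alpha^\vee\rangle\in\mathbb Z_{>0}$ for all $\alpha\in I$ and $\{\alpha\in\Delta:\langle\overline\lambda,\alpha\rangle=0\}=J$; $(\Phi,i,j)$ is a basic system if it has a basic weight. *)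

theory Defs
  imports Complex_Main
begin

text \<open>Weights of C_n are real vectors of R^n, represented as lists of length n;
  coordinate k (1-based) of x is x ! (k - 1).\<close>

definition vadd :: "real list \<Rightarrow> real list \<Rightarrow> real list" where
  "vadd x y = map2 (+) x y"

definition vscale :: "real \<Rightarrow> real list \<Rightarrow> real list" where
  "vscale c x = map ((*) c) x"

definition inner_l :: "real list \<Rightarrow> real list \<Rightarrow> real" where
  "inner_l x y = sum_list (map2 (*) x y)"

definition unit_e :: "nat \<Rightarrow> nat \<Rightarrow> real list" where
  "unit_e n k = map (\<lambda>t. if t = k then 1 else 0) [1..<n+1]"

definition roots_C :: "nat \<Rightarrow> real list set" where
  "roots_C n =
     {vadd (vscale s (unit_e n k)) (vscale t (unit_e n l)) | k l s t.
        1 \<le> k \<and> k < l \<and> l \<le> n \<and> s \<in> {1, -1} \<and> t \<in> {1, -1}}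
   \<union> {vscale (2 * s) (unit_e n k) | k s. 1 \<le> k \<and> k \<le> n \<and> s \<in> {1, -1}}"

definition simple_root :: "nat \<Rightarrow> nat \<Rightarrow> real list" where
  "simple_root n k = (if k < n then vadd (unit_e n k) (vscale (-1) (unit_e n (k+1)))
                      else vscale 2 (unit_e n n))"

definition coroot :: "real list \<Rightarrow> real list" where
  "coroot a = vscale (2 / inner_l a a) a"

definition integral_weight :: "nat \<Rightarrow> real list \<Rightarrow> bool" where
  "integral_weight n x \<longleftrightarrow> (\<forall>a\<in>roots_C n. inner_l x (coroot a) \<in> \<int>)"

definition refl :: "real list \<Rightarrow> real list \<Rightarrow> real list" where
  "refl a x = vadd x (vscale (- inner_l x (coroot a)) a)"

text \<open>The Weyl orbit W x: W is generated by the simple reflections (W is finite,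
  so the generated monoid is the generated group).\<close>
inductive_set weyl_orbit :: "nat \<Rightarrow> real list \<Rightarrow> real list set" for n x where
  base: "x \<in> weyl_orbit n x"
| step: "y \<in> weyl_orbit n x \<Longrightarrow> 1 \<le> k \<Longrightarrow> k \<le> n \<Longrightarrow>
           refl (simple_root n k) y \<in> weyl_orbit n x"

definition dominant :: "nat \<Rightarrow> real list \<Rightarrow> bool" where
  "dominant n y \<longleftrightarrow> (\<forall>k\<in>{1..n}. inner_l y (simple_root n k) \<ge> 0)"

definition dom_rep :: "nat \<Rightarrow> real list \<Rightarrow> real list" where
  "dom_rep n x = (THE y. y \<in> weyl_orbit n x \<and> dominant n y)"

text \<open>Basic weight of (C_n, i, j): I = Delta - {alpha_i}, J = Delta - {alpha_j}
  (simple roots identified with their indices 1..n).\<close>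
definition basic_weight :: "nat \<Rightarrow> nat \<Rightarrow> nat \<Rightarrow> real list \<Rightarrow> bool" where
  "basic_weight n i j x \<longleftrightarrow>
     length x = n \<and> integral_weight n x \<and>
     (\<forall>k\<in>{1..n} - {i}. \<exists>m::int. m > 0 \<and> inner_l x (coroot (simple_root n k)) = of_int m) \<and>
     {k\<in>{1..n}. inner_l (dom_rep n x) (simple_root n k) = 0} = {1..n} - {j}"

definition basic_system :: "nat \<Rightarrow> nat \<Rightarrow> nat \<Rightarrow> bool" where
  "basic_system n i j \<longleftrightarrow> (\<exists>x. basic_weight n i j x)"

definition listed_weights :: "nat \<Rightarrow> nat \<Rightarrow> nat \<Rightarrow> real list set" where
  "listed_weights n i j =
    (if (n, i, j) = (2, 1, 1) then {[0, 1]}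
     else if (n, i, j) = (2, 1, 2) then {[1, 1], [-1, 1]}
     else if (n, i, j) = (2, 2, 1) then {[1, 0], [0, -1]}
     else if (n, i, j) = (2, 2, 2) then {[1, -1]}
     else if (n, i, j) = (3, 2, 2) then {[1, 0, 1], [0, -1, 1]}
     else if (n, i, j) = (3, 2, 3) then {[1, -1, 1]}
     else if (n, i, j) = (3, 3, 2) then {[1, 0, -1]}
     else if (n, i, j) = (4, 3, 3) then {[1, 0, -1, 1]}
     else {})"

end

theory Submission
  imports Defs "HOL-Library.Multiset"
begin

lemma len_unit_e[simp]: "length (unit_e n k) = n"
  by (simp add: unit_e_def)
lemma nth_unit_e[simp]: "t < n \<Longrightarrow> unit_e n k ! t = (if t + 1 = k then 1 else 0)"
  unfolding unit_e_def by (simp del: upt_Suc)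
lemma len_vadd[simp]: "length (vadd a b) = min (length a) (length b)"
  by (simp add: vadd_def)
lemma nth_vadd[simp]: "t < length a \<Longrightarrow> t < length b \<Longrightarrow> vadd a b ! t = a ! t + b ! t"
  by (simp add: vadd_def)
lemma len_vscale[simp]: "length (vscale c a) = length a"
  by (simp add: vscale_def)
lemma nth_vscale[simp]: "t < length a \<Longrightarrow> vscale c a ! t = c * a ! t"
  by (simp add: vscale_def)

lemma inner_l_sum: "length a = length b \<Longrightarrow> inner_l a b = (\<Sum>t<length a. a ! t * b ! t)"
  unfolding inner_l_def
  by (simp add: sum_list_sum_nth atLeast0LessThan)

lemma len_sr[simp]: "length (simple_root n k) = n"
  by (simp add: simple_root_def)

lemma nth_sr: "t < n \<Longrightarrow> 1 \<le> k \<Longrightarrow> k \<le> n \<Longrightarrow> simple_root n k ! t =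
   (if k < n then (if t + 1 = k then 1 else if t = k then -1 else 0) else (if t + 1 = n then 2 else 0))"
  by (cases "k < n") (auto simp: simple_root_def)

lemma sum_one: "a < (n::nat) \<Longrightarrow> (\<Sum>t<n. if t = a then (A::real) else 0) = A"
  by (simp add: sum.delta)

lemma sum_two: "a < (n::nat) \<Longrightarrow> b < n \<Longrightarrow> a \<noteq> b \<Longrightarrow>
  (\<Sum>t<n. (if t = a then (A::real) else if t = b then B else 0)) = A + B"
proof -
  assume h: "a < n" "b < n" "a \<noteq> b"
  have "(\<Sum>t<n. (if t = a then (A::real) else if t = b then B else 0)) =
        (\<Sum>t<n. (if t = a then A else 0) + (if t = b then B else 0))"
    by (rule sum.cong) (use h in auto)
  also have "\<dots> = A + B" using h by (simp only: sum.distrib sum_one)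
  finally show ?thesis .
qed

lemma inner_sr: assumes "length y = n" "1 \<le> k" "k \<le> n"
  shows "inner_l y (simple_root n k) = (if k < n then y ! (k-1) - y ! k else 2 * y ! (n-1))"
proof -
  have s: "inner_l y (simple_root n k) = (\<Sum>t<n. y ! t * simple_root n k ! t)"
    using assms by (simp add: inner_l_sum)
  show ?thesis
  proof (cases "k < n")
    case True
    have "(\<Sum>t<n. y ! t * simple_root n k ! t) =
        (\<Sum>t<n. (if t = k - 1 then y ! (k-1) else if t = k then - y ! k else 0))"
    proof (rule sum.cong)
      fix t assume t: "t \<in> {..<n}"
      consider "t = k - 1" | "t = k" | "t \<noteq> k - 1" "t \<noteq> k" by blast
      then show "y ! t * simple_root n k ! t = (if t = k - 1 then y ! (k-1) else if t = k then - y ! k else 0)"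
      proof cases
        case 1
        then have "simple_root n k ! t = 1" using t assms True by (simp add: nth_sr)
        then show ?thesis using 1 by simp
      next
        case 2
        then have "simple_root n k ! t = -1" using t assms True by (simp add: nth_sr)
        moreover have "k \<noteq> k - 1" using assms by simp
        ultimately show ?thesis using 2 by simp
      next
        case 3
        then have "simple_root n k ! t = 0" using t assms True by (simp add: nth_sr)
        then show ?thesis using 3 by simp
      qed
    qed simp
    also have "\<dots> = y ! (k-1) - y ! k"
      using sum_two[of "k-1" n k "y ! (k-1)" "- y ! k"] True assms by simp
    finally show ?thesis using s True by simp
  next
    case False
    then have kn: "k = n" using assms by simp
    have "(\<Sum>t<n. y ! t * simple_root n k ! t) = (\<Sum>t<n. (if t = n - 1 then 2 * y ! (n-1) else 0))"
    proof (rule sum.cong)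
      fix t assume t: "t \<in> {..<n}"
      show "y ! t * simple_root n k ! t = (if t = n - 1 then 2 * y ! (n-1) else 0)"
      proof (cases "t = n - 1")
        case True
        then have "simple_root n k ! t = 2" using t assms kn by (simp add: nth_sr)
        then show ?thesis using True by simp
      next
        case F: False
        then have "simple_root n k ! t = 0" using t assms kn by (simp add: nth_sr)
        then show ?thesis using F by simp
      qed
    qed simp
    also have "\<dots> = 2 * y ! (n-1)" using sum_one[of "n-1" n] assms by simp
    finally show ?thesis using s kn by simp
  qed
qed

lemma inner_self_sr: "1 \<le> k \<Longrightarrow> k \<le> n \<Longrightarrow> inner_l (simple_root n k) (simple_root n k) = (if k < n then 2 else 4)"
  by (simp add: inner_sr nth_sr)

lemma coroot_sr: assumes "1 \<le> k" "k \<le> n"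
  shows "coroot (simple_root n k) = vscale (if k < n then 1 else 1/2) (simple_root n k)"
  using assms by (simp add: coroot_def inner_self_sr)

lemma inner_vscale: "inner_l y (vscale c a) = c * inner_l y a"
  unfolding inner_l_def vscale_def
  by (induct y a rule: list_induct2') (auto simp: algebra_simps)

lemma inner_cosr: assumes "length y = n" "1 \<le> k" "k \<le> n"
  shows "inner_l y (coroot (simple_root n k)) = (if k < n then y ! (k-1) - y ! k else y ! (n-1))"
  using assms by (simp add: coroot_sr inner_vscale inner_sr)

lemma nth_refl: "length y = length a \<Longrightarrow> t < length y \<Longrightarrow>
   refl a y ! t = y ! t - inner_l y (coroot a) * a ! t"
  by (simp add: refl_def)

lemma refl_sr: assumes "length y = n" "1 \<le> k" "k \<le> n"
  shows "refl (simple_root n k) y = (if k < n then y[k-1 := y ! k, k := y ! (k-1)] else y[n-1 := - y ! (n-1)])"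
proof (rule nth_equalityI)
  show "length (refl (simple_root n k) y) = length (if k < n then y[k-1 := y ! k, k := y ! (k-1)] else y[n-1 := - y ! (n-1)])"
    using assms by (simp add: refl_def)
next
  fix t assume "t < length (refl (simple_root n k) y)"
  then have t: "t < n" using assms by (simp add: refl_def)
  have r: "refl (simple_root n k) y ! t = y ! t - inner_l y (coroot (simple_root n k)) * simple_root n k ! t"
    using t assms by (simp add: nth_refl)
  show "refl (simple_root n k) y ! t = (if k < n then y[k-1 := y ! k, k := y ! (k-1)] else y[n-1 := - y ! (n-1)]) ! t"
  proof (cases "k < n")
    case True
    have c: "inner_l y (coroot (simple_root n k)) = y ! (k-1) - y ! k" using True assms by (simp add: inner_cosr)
    consider "t = k - 1" | "t = k" | "t \<noteq> k - 1" "t \<noteq> k" by blast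
    then show ?thesis
    proof cases
      case 1
      then have "simple_root n k ! t = 1" using t assms True by (simp add: nth_sr)
      then show ?thesis using r c 1 True t assms by simp
    next
      case 2
      then have "simple_root n k ! t = -1" using t assms True by (simp add: nth_sr)
      then show ?thesis using r c 2 True t assms by simp
    next
      case 3
      then have "simple_root n k ! t = 0" using t assms True by (simp add: nth_sr)
      then show ?thesis using r c 3 True t assms by simp
    qed
  next
    case False
    then have kn: "k = n" using assms by simp
    have c: "inner_l y (coroot (simple_root n k)) = y ! (n-1)" using kn assms by (simp add: inner_cosr)
    show ?thesis
    proof (cases "t = n - 1")
      case True
      then have "simple_root n k ! t = 2" using t assms kn by (simp add: nth_sr)
      then show ?thesis using r c True kn t assms by simp
    next
      case F: False
      then have "simple_root n k ! t = 0" using t assms kn by (simp add: nth_sr)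
      then show ?thesis using r c F kn t assms by simp
    qed
  qed
qed

lemma orbit_inv: assumes "y \<in> weyl_orbit n x" "length x = n"
  shows "length y = n \<and> mset (map abs y) = mset (map abs x)"
  using assms(1)
proof induct
  case base
  then show ?case using assms(2) by simp
next
  case (step y k)
  have ly: "length y = n" and my: "mset (map abs y) = mset (map abs x)" using step.hyps(2) by auto
  have k1: "1 \<le> k" and k2: "k \<le> n" using step.hyps(3,4) .
  show ?case
  proof (cases "k < n")
    case True
    have r: "refl (simple_root n k) y = y[k-1 := y ! k, k := y ! (k-1)]"
      using refl_sr[OF ly k1 k2] True by simp
    have e: "map abs (y[k-1 := y ! k, k := y ! (k-1)]) = (map abs y)[k-1 := map abs y ! k, k := map abs y ! (k-1)]"
      using True ly k1 by (simp only: map_update nth_map)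
    have "mset ((map abs y)[k-1 := map abs y ! k, k := map abs y ! (k-1)]) = mset (map abs y)"
      by (rule mset_swap) (use True ly in simp_all)
    then show ?thesis using r e my ly by simp
  next
    case False
    then have kn: "k = n" using k2 by simp
    have r: "refl (simple_root n k) y = y[n-1 := - y ! (n-1)]"
      using refl_sr[OF ly k1 k2] kn by simp
    have "map abs (y[n-1 := - y ! (n-1)]) = (map abs y)[n-1 := \<bar>y ! (n-1)\<bar>]"
      by (simp only: map_update) simp
    also have "\<dots> = map abs y" using ly k1 kn by (intro nth_equalityI) (auto simp: nth_list_update)
    finally show ?thesis using r ly my by simp
  qed
qed

lemma orbit_finite: assumes "length x = n" shows "finite (weyl_orbit n x)"
proof -
  have "weyl_orbit n x \<subseteq> {ys. set ys \<subseteq> set x \<union> uminus ` set x \<and> length ys = n}"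
  proof
    fix y assume y: "y \<in> weyl_orbit n x"
    have i: "length y = n" "mset (map abs y) = mset (map abs x)" using orbit_inv[OF y assms] by auto
    have "set_mset (mset (map abs y)) = set_mset (mset (map abs x))" using i by simp
    then have s: "set (map abs y) = set (map abs x)" by simp
    have "set y \<subseteq> set x \<union> uminus ` set x"
    proof
      fix v assume "v \<in> set y"
      then have "\<bar>v\<bar> \<in> set (map abs x)" using s by auto
      then obtain w where w: "w \<in> set x" "\<bar>v\<bar> = \<bar>w\<bar>" by auto
      then have "v = w \<or> v = - w" by arith
      then show "v \<in> set x \<union> uminus ` set x" using w by auto
    qed
    then show "y \<in> {ys. set ys \<subseteq> set x \<union> uminus ` set x \<and> length ys = n}" using i by simp
  qed
  moreover have "finite {ys. set ys \<subseteq> set x \<union> uminus ` set x \<and> length ys = n}"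
    by (rule finite_lists_length_eq) simp
  ultimately show ?thesis by (rule finite_subset)
qed

definition phi :: "nat \<Rightarrow> real list \<Rightarrow> real" where
  "phi n y = (\<Sum>t<n. real (n - t) * y ! t)"

lemma phi_diff: "phi n z - phi n y = (\<Sum>t<n. real (n - t) * (z ! t - y ! t))"
  unfolding phi_def sum_subtractf[symmetric] by (simp add: right_diff_distrib)

lemma dominant_iff: assumes "length y = n"
  shows "dominant n y \<longleftrightarrow> (\<forall>k. 1 \<le> k \<and> k < n \<longrightarrow> y ! (k-1) \<ge> y ! k) \<and> (1 \<le> n \<longrightarrow> y ! (n-1) \<ge> 0)"
proof
  assume d: "dominant n y"
  show "(\<forall>k. 1 \<le> k \<and> k < n \<longrightarrow> y ! (k-1) \<ge> y ! k) \<and> (1 \<le> n \<longrightarrow> y ! (n-1) \<ge> 0)"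
  proof (intro conjI allI impI)
    fix k assume k: "1 \<le> k \<and> k < n"
    then have "inner_l y (simple_root n k) \<ge> 0" using d unfolding dominant_def by auto
    then show "y ! (k-1) \<ge> y ! k" using k assms by (simp add: inner_sr)
  next
    assume n: "1 \<le> n"
    then have "inner_l y (simple_root n n) \<ge> 0" using d unfolding dominant_def by auto
    then show "y ! (n-1) \<ge> 0" using n assms by (simp add: inner_sr)
  qed
next
  assume h: "(\<forall>k. 1 \<le> k \<and> k < n \<longrightarrow> y ! (k-1) \<ge> y ! k) \<and> (1 \<le> n \<longrightarrow> y ! (n-1) \<ge> 0)"
  show "dominant n y" unfolding dominant_def
  proof
    fix k assume k: "k \<in> {1..n}"
    show "inner_l y (simple_root n k) \<ge> 0"
    proof (cases "k < n")
      case True then show ?thesis using h k assms by (simp add: inner_sr)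
    next
      case False then have "k = n" using k by simp
      then show ?thesis using h k assms by (simp add: inner_sr)
    qed
  qed
qed


lemma exists_dominant: assumes "length x = n" "n \<ge> 1"
  shows "\<exists>y\<in>weyl_orbit n x. dominant n y"
proof -
  let ?O = "weyl_orbit n x"
  have fin: "finite (phi n ` ?O)" using orbit_finite[OF assms(1)] by simp
  have ne: "phi n ` ?O \<noteq> {}" using weyl_orbit.base by blast
  obtain y where y: "y \<in> ?O" "phi n y = Max (phi n ` ?O)" using Max_in[OF fin ne] by auto
  have mx: "\<And>z. z \<in> ?O \<Longrightarrow> phi n z \<le> phi n y" using y(2) Max_ge[OF fin] by auto
  have ly: "length y = n" using orbit_inv[OF y(1) assms(1)] by simp
  have "dominant n y"
    unfolding dominant_iff[OF ly]
  proof (intro conjI allI impI)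
    fix k assume k: "1 \<le> k \<and> k < n"
    show "y ! k \<le> y ! (k-1)"
    proof (rule ccontr)
      assume c: "\<not> y ! k \<le> y ! (k-1)"
      let ?z = "y[k-1 := y ! k, k := y ! (k-1)]"
      have zO: "?z \<in> ?O" using weyl_orbit.step[OF y(1), of k] k ly by (simp add: refl_sr)
      have "phi n ?z - phi n y = (\<Sum>t<n. (if t = k-1 then real (n - (k-1)) * (y ! k - y ! (k-1))
              else if t = k then real (n - k) * (y ! (k-1) - y ! k) else 0))"
        unfolding phi_diff by (rule sum.cong) (use k ly in \<open>auto simp: nth_list_update\<close>)
      also have "\<dots> = real (n - (k-1)) * (y ! k - y ! (k-1)) + real (n - k) * (y ! (k-1) - y ! k)"
        by (rule sum_two) (use k in auto)
      also have "\<dots> = y ! k - y ! (k-1)"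
      proof -
        have "real (n - (k-1)) = real (n - k) + 1" using k by simp
        then show ?thesis by (simp add: algebra_simps)
      qed
      finally have "phi n ?z > phi n y" using c by simp
      then show False using mx[OF zO] by simp
    qed
  next
    assume "1 \<le> n"
    show "y ! (n-1) \<ge> 0"
    proof (rule ccontr)
      assume c: "\<not> y ! (n-1) \<ge> 0"
      let ?z = "y[n-1 := - y ! (n-1)]"
      have zO: "?z \<in> ?O" using weyl_orbit.step[OF y(1), of n] assms(2) ly by (simp add: refl_sr)
      have "phi n ?z - phi n y = (\<Sum>t<n. (if t = n-1 then real (n - (n-1)) * (- 2 * y ! (n-1)) else 0))"
        unfolding phi_diff by (rule sum.cong) (use assms(2) ly in \<open>auto simp: nth_list_update\<close>)
      also have "\<dots> = real (n - (n-1)) * (- 2 * y ! (n-1))"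
        by (rule sum_one) (use assms(2) in auto)
      finally have "phi n ?z > phi n y" using c assms(2) by simp
      then show False using mx[OF zO] by simp
    qed
  qed
  then show ?thesis using y(1) by blast
qed

lemma dominant_props: assumes "length y = n" "n \<ge> 1" "dominant n y"
  shows "sorted (rev y)" "\<forall>t<n. y ! t \<ge> 0"
proof -
  have d: "\<forall>k. 1 \<le> k \<and> k < n \<longrightarrow> y ! (k-1) \<ge> y ! k" "y ! (n-1) \<ge> 0"
    using assms dominant_iff by auto
  show s: "sorted (rev y)"
    unfolding sorted_iff_nth_Suc
  proof (intro allI impI)
    fix i assume "Suc i < length (rev y)"
    then show "rev y ! i \<le> rev y ! Suc i"
      using d(1)[rule_format, of "n - Suc i"] assms(1) by (simp add: rev_nth Suc_diff_Suc)
  qed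
  show "\<forall>t<n. y ! t \<ge> 0"
  proof (intro allI impI)
    fix t assume t: "t < n"
    have "rev y ! 0 \<le> rev y ! (n - 1 - t)"
      using s t assms(1) by (simp add: sorted_iff_nth_mono)
    then show "y ! t \<ge> 0" using d(2) t assms(1,2) by (simp add: rev_nth)
  qed
qed

lemma dominant_unique: assumes "length x = n" "n \<ge> 1"
  "y \<in> weyl_orbit n x" "dominant n y" "z \<in> weyl_orbit n x" "dominant n z"
  shows "y = z"
proof -
  have iy: "length y = n" "mset (map abs y) = mset (map abs x)" using orbit_inv[OF assms(3,1)] by auto
  have iz: "length z = n" "mset (map abs z) = mset (map abs x)" using orbit_inv[OF assms(5,1)] by auto
  note py = dominant_props[OF iy(1) assms(2,4)]
  note pz = dominant_props[OF iz(1) assms(2,6)]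
  have ay: "map abs y = y" using py(2) iy(1) by (intro nth_equalityI) auto
  have az: "map abs z = z" using pz(2) iz(1) by (intro nth_equalityI) auto
  have "mset (rev y) = mset (rev z)" using iy(2) iz(2) ay az by simp
  then have "sort (rev z) = rev y" using py(1) by (rule properties_for_sort)
  moreover have "sort (rev z) = rev z" using pz(1) by (simp add: sorted_sort_id)
  ultimately show ?thesis by simp
qed

lemma dom_rep_props: assumes "length x = n" "n \<ge> 1"
  shows "dom_rep n x \<in> weyl_orbit n x \<and> dominant n (dom_rep n x)"
proof -
  obtain y where y: "y \<in> weyl_orbit n x" "dominant n y" using exists_dominant[OF assms] by blast
  have "\<exists>!y. y \<in> weyl_orbit n x \<and> dominant n y"
    using y dominant_unique[OF assms] by blast
  then show ?thesis unfolding dom_rep_def by (rule theI')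
qed

lemma gap3: "(c::real) > 0 \<Longrightarrow> v \<in> {-c,0,c} \<Longrightarrow> w \<in> {-c,0,c} \<Longrightarrow> w < v \<Longrightarrow> w + c \<le> v"
  by auto
lemma bnd3: "(c::real) > 0 \<Longrightarrow> v \<in> {-c,0,c} \<Longrightarrow> -c \<le> v \<and> v \<le> c"
  by auto
lemma pos3: "(c::real) > 0 \<Longrightarrow> v \<in> {-c,0,c} \<Longrightarrow> 0 < v \<Longrightarrow> v = c"
  by auto

lemma fin4:
  fixes a b d e c :: real
  assumes "c > 0" "a \<in> {-c,0,c}" "b \<in> {-c,0,c}" "d \<in> {-c,0,c}" "e \<in> {-c,0,c}"
    "i \<in> {1..4}" "j \<in> {1..4}" "length (filter (\<lambda>v. v \<noteq> 0) [a,b,d,e]) = j"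
    "\<forall>k. 1 \<le> k \<and> k < 4 \<and> k \<noteq> i \<longrightarrow> [a,b,d,e] ! (k-1) > [a,b,d,e] ! k"
    "i \<noteq> 4 \<longrightarrow> e > 0"
  shows "[a,b,d,e] \<in> vscale c ` listed_weights 4 i j"
proof -
  have i: "i = 1 \<or> i = 2 \<or> i = 3 \<or> i = 4" using assms(6) by auto
  have k1: "i \<noteq> 1 \<Longrightarrow> a \<ge> b + c" using assms(9)[rule_format, of 1] gap3[OF assms(1,2,3)] by simp
  have k2: "i \<noteq> 2 \<Longrightarrow> b \<ge> d + c" using assms(9)[rule_format, of 2] gap3[OF assms(1,3,4)] by simp
  have k3: "i \<noteq> 3 \<Longrightarrow> d \<ge> e + c" using assms(9)[rule_format, of 3] gap3[OF assms(1,4,5)] by simp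
  have k4: "i \<noteq> 4 \<Longrightarrow> e = c" using assms(10) pos3[OF assms(1,5)] by simp
  note b = bnd3[OF assms(1,2)] bnd3[OF assms(1,3)] bnd3[OF assms(1,4)] bnd3[OF assms(1,5)]
  have i3: "i = 3"
  proof (rule ccontr)
    assume "i \<noteq> 3"
    then show False using i k1 k2 k3 k4 b assms(1) by (elim disjE) linarith+
  qed
  have f: "b + c \<le> a" "d + c \<le> b" "e = c" using i3 k1 k2 k4 by simp_all
  have v: "a = c" "b = 0" "d = -c" "e = c" using f b assms(1) by linarith+
  then have "j = 3" using assms(1,8) by simp
  then have "[a,b,d,e] = vscale c [1,0,-1,1]" "[1,0,-1,1] \<in> listed_weights 4 i j"
    using v i3 by (auto simp: listed_weights_def vscale_def)
  then show ?thesis by blast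
qed

lemma fin3:
  fixes a b d c :: real
  assumes "c > 0" "a \<in> {-c,0,c}" "b \<in> {-c,0,c}" "d \<in> {-c,0,c}"
    "i \<in> {1..3}" "j \<in> {1..3}" "length (filter (\<lambda>v. v \<noteq> 0) [a,b,d]) = j"
    "\<forall>k. 1 \<le> k \<and> k < 3 \<and> k \<noteq> i \<longrightarrow> [a,b,d] ! (k-1) > [a,b,d] ! k"
    "i \<noteq> 3 \<longrightarrow> d > 0"
  shows "[a,b,d] \<in> vscale c ` listed_weights 3 i j"
proof -
  have i: "i = 1 \<or> i = 2 \<or> i = 3" using assms(5) by auto
  have k1: "i \<noteq> 1 \<Longrightarrow> a \<ge> b + c" using assms(8)[rule_format, of 1] gap3[OF assms(1,2,3)] by simp
  have k2: "i \<noteq> 2 \<Longrightarrow> b \<ge> d + c" using assms(8)[rule_format, of 2] gap3[OF assms(1,3,4)] by simp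
  have k3: "i \<noteq> 3 \<Longrightarrow> d = c" using assms(9) pos3[OF assms(1,4)] by simp
  note bd = bnd3[OF assms(1,2)] bnd3[OF assms(1,3)] bnd3[OF assms(1,4)]
  have "i \<noteq> 1"
  proof
    assume "i = 1"
    then have "b \<ge> d + c" "d = c" using k2 k3 by simp_all
    then show False using bd assms(1) by linarith
  qed
  then have "i = 2 \<or> i = 3" using i by simp
  then show ?thesis
  proof
    assume i2: "i = 2"
    then have f: "a \<ge> b + c" "d = c" using k1 k3 by simp_all
    have "b = 0 \<or> b = -c" using f bd assms(1,3) by auto
    then show ?thesis
    proof
      assume b0: "b = 0"
      then have a: "a = c" using f bd by linarith
      then have "j = 2" using b0 f assms(1,7) by simp
      then have "[a,b,d] = vscale c [1,0,1]" "[1,0,1] \<in> listed_weights 3 i j"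
        using a b0 f i2 by (auto simp: listed_weights_def vscale_def)
      then show ?thesis by blast
    next
      assume b1: "b = -c"
      have "a = 0 \<or> a = c" using assms(1,2) f b1 by auto
      then show ?thesis
      proof
        assume a: "a = 0"
        then have "j = 2" using b1 f assms(1,7) by simp
        then have "[a,b,d] = vscale c [0,-1,1]" "[0,-1,1] \<in> listed_weights 3 i j"
          using a b1 f i2 by (auto simp: listed_weights_def vscale_def)
        then show ?thesis by blast
      next
        assume a: "a = c"
        then have "j = 3" using b1 f assms(1,7) by simp
        then have "[a,b,d] = vscale c [1,-1,1]" "[1,-1,1] \<in> listed_weights 3 i j"
          using a b1 f i2 by (auto simp: listed_weights_def vscale_def)
        then show ?thesis by blast
      qed
    qed
  next
    assume i3: "i = 3"
    then have f: "a \<ge> b + c" "b \<ge> d + c" using k1 k2 by simp_all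
    have v: "a = c" "b = 0" "d = -c" using f bd assms(1) by linarith+
    then have "j = 2" using assms(1,7) by simp
    then have "[a,b,d] = vscale c [1,0,-1]" "[1,0,-1] \<in> listed_weights 3 i j"
      using v i3 by (auto simp: listed_weights_def vscale_def)
    then show ?thesis by blast
  qed
qed

lemma fin2:
  fixes a b c :: real
  assumes "c > 0" "a \<in> {-c,0,c}" "b \<in> {-c,0,c}"
    "i \<in> {1..2}" "j \<in> {1..2}" "length (filter (\<lambda>v. v \<noteq> 0) [a,b]) = j"
    "\<forall>k. 1 \<le> k \<and> k < 2 \<and> k \<noteq> i \<longrightarrow> [a,b] ! (k-1) > [a,b] ! k"
    "i \<noteq> 2 \<longrightarrow> b > 0"
  shows "[a,b] \<in> vscale c ` listed_weights 2 i j"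
proof -
  have i: "i = 1 \<or> i = 2" using assms(4) by auto
  then show ?thesis
  proof
    assume i1: "i = 1"
    then have bc: "b = c" using assms(8) pos3[OF assms(1,3)] by simp
    have "a = 0 \<or> a = c \<or> a = -c" using assms(2) by auto
    then show ?thesis
    proof (elim disjE)
      assume a: "a = 0"
      then have "j = 1" using bc assms(1,6) by simp
      then have "[a,b] = vscale c [0,1]" "[0,1] \<in> listed_weights 2 i j"
        using a bc i1 by (auto simp: listed_weights_def vscale_def)
      then show ?thesis by blast
    next
      assume a: "a = c"
      then have "j = 2" using bc assms(1,6) by simp
      then have "[a,b] = vscale c [1,1]" "[1,1] \<in> listed_weights 2 i j"
        using a bc i1 by (auto simp: listed_weights_def vscale_def)
      then show ?thesis by blast
    next
      assume a: "a = -c"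
      then have "j = 2" using bc assms(1,6) by simp
      then have "[a,b] = vscale c [-1,1]" "[-1,1] \<in> listed_weights 2 i j"
        using a bc i1 by (auto simp: listed_weights_def vscale_def)
      then show ?thesis by blast
    qed
  next
    assume i2: "i = 2"
    then have f: "a \<ge> b + c" using assms(7)[rule_format, of 1] gap3[OF assms(1,2,3)] by simp
    have "(a = c \<and> b = 0) \<or> (a = 0 \<and> b = -c) \<or> (a = c \<and> b = -c)"
      using f assms(1,2,3) by auto
    then show ?thesis
    proof (elim disjE)
      assume h: "a = c \<and> b = 0"
      then have "j = 1" using assms(1,6) by simp
      then have "[a,b] = vscale c [1,0]" "[1,0] \<in> listed_weights 2 i j"
        using h i2 by (auto simp: listed_weights_def vscale_def)
      then show ?thesis by blast
    next
      assume h: "a = 0 \<and> b = -c"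
      then have "j = 1" using assms(1,6) by simp
      then have "[a,b] = vscale c [0,-1]" "[0,-1] \<in> listed_weights 2 i j"
        using h i2 by (auto simp: listed_weights_def vscale_def)
      then show ?thesis by blast
    next
      assume h: "a = c \<and> b = -c"
      then have "j = 2" using assms(1,6) by simp
      then have "[a,b] = vscale c [1,-1]" "[1,-1] \<in> listed_weights 2 i j"
        using h i2 by (auto simp: listed_weights_def vscale_def)
      then show ?thesis by blast
    qed
  qed
qed

lemma bound4:
  fixes x :: "real list"
  assumes "length x = n" "n \<ge> 2" "c > 0" "\<forall>t<n. x ! t \<in> {-c,0,c}" "i \<in> {1..n}"
    "\<forall>k. 1 \<le> k \<and> k < n \<and> k \<noteq> i \<longrightarrow> x ! (k-1) > x ! k"
    "i \<noteq> n \<longrightarrow> x ! (n-1) > 0"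
  shows "n \<le> 4"
proof (rule ccontr)
  assume "\<not> n \<le> 4"
  then have n5: "n \<ge> 5" by simp
  have b: "\<And>t. t < n \<Longrightarrow> -c \<le> x ! t \<and> x ! t \<le> c" using assms(3,4) bnd3 by blast
  show False
  proof (cases "i = n \<or> i = n - 1")
    case True
    then have i4: "i \<ge> 4" using n5 by auto
    have g: "\<And>k. 1 \<le> k \<Longrightarrow> k \<le> 3 \<Longrightarrow> x ! (k-1) \<ge> x ! k + c"
    proof -
      fix k :: nat assume k: "1 \<le> k" "k \<le> 3"
      have "x ! (k-1) > x ! k" using assms(6) k i4 n5 by auto
      moreover have "x ! (k-1) \<in> {-c,0,c}" "x ! k \<in> {-c,0,c}" using assms(4) k n5 by auto
      ultimately show "x ! (k-1) \<ge> x ! k + c" using gap3[OF assms(3)] by blast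
    qed
    have "x ! 0 \<ge> x ! 1 + c" "x ! 1 \<ge> x ! 2 + c" "x ! 2 \<ge> x ! 3 + c"
      using g[of 1] g[of 2] g[of 3] by simp_all
    moreover have "x ! 0 \<le> c" "x ! 3 \<ge> -c" using b[of 0] b[of 3] n5 by auto
    ultimately show False using assms(3) by linarith
  next
    case False
    then have "x ! (n-1) > 0" using assms(7) by auto
    moreover have "x ! (n-1) \<in> {-c,0,c}" using assms(4) n5 by auto
    ultimately have e: "x ! (n-1) = c" using pos3[OF assms(3)] by blast
    have "x ! (n-1-1) > x ! (n-1)" using assms(6)[rule_format, of "n-1"] False n5 by auto
    moreover have "x ! (n-1-1) \<le> c" using b[of "n-1-1"] n5 by auto
    ultimately show False using e by simp
  qed
qed

lemma chain_eq:
  assumes "\<forall>k. a \<le> k \<and> k < b \<longrightarrow> (d::real list) ! k = d ! (k+1)"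
  shows "a \<le> t \<Longrightarrow> t \<le> b \<Longrightarrow> d ! t = d ! a"
proof (induct t)
  case 0
  then show ?case by simp
next
  case (Suc t)
  show ?case
  proof (cases "a = Suc t")
    case True then show ?thesis by simp
  next
    case False
    then have "a \<le> t" using Suc.prems by simp
    then show ?thesis using Suc assms by auto
  qed
qed

lemma inner_unit: assumes "length x = n" "t < n"
  shows "inner_l x (unit_e n (t+1)) = x ! t"
proof -
  have "inner_l x (unit_e n (t+1)) = (\<Sum>s<n. x ! s * unit_e n (t+1) ! s)"
    using assms by (simp add: inner_l_sum)
  also have "\<dots> = (\<Sum>s<n. (if s = t then x ! t else 0))"
    by (rule sum.cong) auto
  also have "\<dots> = x ! t" using sum_one[of t n] assms by simp
  finally show ?thesis .
qed

lemma integral_nth: assumes "integral_weight n x" "length x = n" "t < n"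
  shows "x ! t \<in> \<int>"
proof -
  let ?r = "vscale (2 * 1) (unit_e n (t+1))"
  have r: "?r \<in> roots_C n" unfolding roots_C_def using assms(3)
    by (intro UnI2) (auto intro!: exI[of _ "t+1"] exI[of _ "1::real"])
  have rr: "inner_l ?r ?r = 4"
  proof -
    have "inner_l ?r ?r = (\<Sum>s<n. ?r ! s * ?r ! s)" by (simp add: inner_l_sum)
    also have "\<dots> = (\<Sum>s<n. (if s = t then 4 else 0))"
      by (rule sum.cong) auto
    also have "\<dots> = 4" using sum_one[of t n] assms(3) by simp
    finally show ?thesis .
  qed
  have "inner_l x (coroot ?r) = x ! t"
    unfolding coroot_def rr using inner_unit[OF assms(2,3)] by (simp add: inner_vscale)
  then show ?thesis using assms(1) r unfolding integral_weight_def by metis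
qed


theorem theorem5p9:
  fixes n i j :: nat and x :: "real list"
  assumes "n \<ge> 2" and "i \<in> {1..n}" and "j \<in> {1..n}"
    and "basic_system n i j"
    and "basic_weight n i j x"
  shows "\<exists>m::nat. m > 0 \<and> (\<exists>y\<in>listed_weights n i j. x = vscale (real m) y)"
proof -
  have lx: "length x = n" and intw: "integral_weight n x"
    and pos: "\<forall>k\<in>{1..n} - {i}. \<exists>m::int. m > 0 \<and> inner_l x (coroot (simple_root n k)) = of_int m"
    and Z: "{k\<in>{1..n}. inner_l (dom_rep n x) (simple_root n k) = 0} = {1..n} - {j}"
    using assms(5) unfolding basic_weight_def by auto
  have n1: "n \<ge> 1" using assms(1) by simp
  define d where "d = dom_rep n x"
  have dO: "d \<in> weyl_orbit n x" and dd: "dominant n d" using dom_rep_props[OF lx n1] d_def by auto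
  have ld: "length d = n" and md: "mset (map abs d) = mset (map abs x)" using orbit_inv[OF dO lx] by auto
  note dp = dominant_props[OF ld n1 dd]
  have ad: "map abs d = d" using dp(2) ld by (intro nth_equalityI) auto
  have md2: "mset d = mset (map abs x)" using md ad by simp
  have Zk: "\<And>k. k \<in> {1..n} \<Longrightarrow> (inner_l d (simple_root n k) = 0) = (k \<noteq> j)"
    using Z unfolding d_def[symmetric] by blast
  have z1: "\<And>k. 1 \<le> k \<Longrightarrow> k < n \<Longrightarrow> k \<noteq> j \<Longrightarrow> d ! (k-1) = d ! k"
    using Zk inner_sr[OF ld] by fastforce
  have z2: "j < n \<Longrightarrow> d ! (j-1) \<noteq> d ! j"
    using Zk[of j] inner_sr[OF ld, of j] assms(3) by auto
  have z3: "j \<noteq> n \<Longrightarrow> d ! (n-1) = 0"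
    using Zk[of n] inner_sr[OF ld, of n] n1 by auto
  have z4: "j = n \<Longrightarrow> d ! (n-1) \<noteq> 0"
    using Zk[of n] inner_sr[OF ld, of n] n1 by auto
  define c where "c = d ! 0"
  have j1: "1 \<le> j" "j \<le> n" using assms(3) by auto
  have lo: "\<And>t. t < j \<Longrightarrow> d ! t = c"
  proof -
    fix t assume t: "t < j"
    have "\<forall>k. 0 \<le> k \<and> k < j - 1 \<longrightarrow> d ! k = d ! (k+1)"
      using z1 j1 by (metis add_diff_cancel_right' le_add2 less_diff_conv less_le_trans not_less_eq add.commute)
    then show "d ! t = c" unfolding c_def using chain_eq[of 0 "j-1" d t] t by simp
  qed
  have hi: "\<And>t. j \<le> t \<Longrightarrow> t < n \<Longrightarrow> d ! t = 0"
  proof -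
    fix t assume t: "j \<le> t" "t < n"
    then have jn: "j < n" by simp
    have "\<forall>k. j \<le> k \<and> k < n - 1 \<longrightarrow> d ! k = d ! (k+1)"
      using z1 j1 by (metis Suc_eq_plus1 diff_Suc_1 less_diff_conv le_add2 le_trans not_less_eq_eq Suc_n_not_le_n)
    note ch = chain_eq[OF this]
    have "d ! t = d ! j" by (rule ch) (use t in simp_all)
    moreover have "d ! (n-1) = d ! j" by (rule ch) (use jn in simp_all)
    ultimately show "d ! t = 0" using z3 jn by simp
  qed
  have c0: "c \<noteq> 0"
  proof (cases "j < n")
    case True
    then show ?thesis using z2 lo[of "j-1"] hi[of j] j1 by auto
  next
    case False
    then show ?thesis using z4 lo[of "n-1"] j1 n1 by auto
  qed
  have cpos: "c > 0" using dp(2) c0 n1 unfolding c_def by (metis less_le_trans less_eq_real_def zero_less_one le_less)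
  have deq: "d = replicate j c @ replicate (n-j) 0"
    by (rule nth_equalityI) (use ld j1 lo hi in \<open>auto simp: nth_append\<close>)
  have sx: "set (map abs x) = set d"
  proof -
    have "set_mset (mset d) = set_mset (mset (map abs x))" using md2 by simp
    then show ?thesis by simp
  qed
  have vals: "\<forall>t<n. x ! t \<in> {-c,0,c}"
  proof (intro allI impI)
    fix t assume t: "t < n"
    then have "\<bar>x ! t\<bar> \<in> set d" using sx lx by (metis length_map nth_map nth_mem)
    then have "\<bar>x ! t\<bar> = c \<or> \<bar>x ! t\<bar> = 0" using deq by (auto split: if_splits)
    then have "x ! t = c \<or> x ! t = -c \<or> x ! t = 0" by arith
    then show "x ! t \<in> {-c,0,c}" by blast
  qed
  have cnt: "length (filter (\<lambda>v. v \<noteq> 0) x) = j"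
  proof -
    have "length (filter (\<lambda>v. v \<noteq> 0) x) = length (filter (\<lambda>v. v \<noteq> 0) (map abs x))"
      by (simp add: filter_map comp_def)
    also have "\<dots> = size (filter_mset (\<lambda>v. v \<noteq> 0) (mset (map abs x)))"
      by (metis mset_filter size_mset)
    also have "\<dots> = size (filter_mset (\<lambda>v. v \<noteq> 0) (mset d))" using md2 by simp
    also have "\<dots> = length (filter (\<lambda>v. v \<noteq> 0) d)" by (metis mset_filter size_mset)
    also have "\<dots> = j" using deq c0 by simp
    finally show ?thesis .
  qed
  have ineq: "\<forall>k. 1 \<le> k \<and> k < n \<and> k \<noteq> i \<longrightarrow> x ! (k-1) > x ! k"
  proof (intro allI impI)
    fix k assume k: "1 \<le> k \<and> k < n \<and> k \<noteq> i"
    then have "k \<in> {1..n} - {i}" by simp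
    then obtain m :: int where "m > 0" "inner_l x (coroot (simple_root n k)) = of_int m" using pos by blast
    then show "x ! (k-1) > x ! k" using inner_cosr[OF lx, of k] k by simp
  qed
  have lastp: "i \<noteq> n \<longrightarrow> x ! (n-1) > 0"
  proof
    assume "i \<noteq> n"
    then have "n \<in> {1..n} - {i}" using n1 by simp
    then obtain m :: int where "m > 0" "inner_l x (coroot (simple_root n n)) = of_int m" using pos by blast
    then show "x ! (n-1) > 0" using inner_cosr[OF lx, of n] n1 by simp
  qed
  have cint: "c \<in> \<int>"
  proof -
    have "filter (\<lambda>v. v \<noteq> 0) x \<noteq> []" using cnt j1 by auto
    then have "\<exists>v\<in>set x. v \<noteq> 0" by (simp add: filter_empty_conv)
    then obtain v where v: "v \<in> set x" "v \<noteq> 0" by blast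
    then have "\<exists>t<n. x ! t = v" using lx by (simp add: in_set_conv_nth)
    then obtain t where t: "t < n" "x ! t = v" by blast
    have "x ! t \<in> \<int>" using integral_nth[OF intw lx t(1)] .
    moreover have "x ! t \<in> {-c,0,c}" using vals t by blast
    then have "\<bar>x ! t\<bar> = c" using t v cpos by auto
    ultimately show ?thesis using Ints_abs by metis
  qed
  then obtain ci :: int where ci: "c = of_int ci" by (auto elim: Ints_cases)
  define m where "m = nat ci"
  have cm: "c = real m" "m > 0" using ci cpos unfolding m_def by auto
  have n4: "n \<le> 4" using bound4[OF lx assms(1) cpos vals assms(2) ineq lastp] .
  have mem: "x \<in> vscale c ` listed_weights n i j"
  proof -
    have "n = 2 \<or> n = 3 \<or> n = 4" using n4 assms(1) by auto
    then show ?thesis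
    proof (elim disjE)
      assume n2: "n = 2"
      have xe: "x = [x!0, x!1]" using lx n2 by (intro nth_equalityI) (auto simp: less_2_cases_iff)
      obtain a b where xe2: "x = [a, b]" using xe by blast
      have "[a, b] \<in> vscale c ` listed_weights 2 i j"
      proof (rule fin2[OF cpos])
        show "i \<in> {1..2}" "j \<in> {1..2}" using assms(2,3) n2 by simp_all
        show "length (filter (\<lambda>v. v \<noteq> 0) [a, b]) = j" using cnt by (simp only: xe2)
        show "\<forall>k. 1 \<le> k \<and> k < 2 \<and> k \<noteq> i \<longrightarrow> [a, b] ! (k-1) > [a, b] ! k" using ineq by (simp only: xe2 n2)
        show "i \<noteq> 2 \<longrightarrow> b > 0" using lastp xe2 n2 by simp
      qed (use vals[rule_format, of 0] vals[rule_format, of 1] xe2 n2 in simp_all)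
      then show ?thesis using xe2 n2 by simp
    next
      assume n3: "n = 3"
      have xe: "x = [x!0, x!1, x!2]" using lx n3 by (intro nth_equalityI) (auto simp: nth_Cons' numeral_eq_Suc less_Suc_eq)
      obtain a b e where xe2: "x = [a, b, e]" using xe by blast
      have "[a, b, e] \<in> vscale c ` listed_weights 3 i j"
      proof (rule fin3[OF cpos])
        show "i \<in> {1..3}" "j \<in> {1..3}" using assms(2,3) n3 by simp_all
        show "length (filter (\<lambda>v. v \<noteq> 0) [a, b, e]) = j" using cnt by (simp only: xe2)
        show "\<forall>k. 1 \<le> k \<and> k < 3 \<and> k \<noteq> i \<longrightarrow> [a, b, e] ! (k-1) > [a, b, e] ! k" using ineq by (simp only: xe2 n3)
        show "i \<noteq> 3 \<longrightarrow> e > 0" using lastp xe2 n3 by simp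
      qed (use vals[rule_format, of 0] vals[rule_format, of 1] vals[rule_format, of 2] xe2 n3 in simp_all)
      then show ?thesis using xe2 n3 by simp
    next
      assume n4: "n = 4"
      have xe: "x = [x!0, x!1, x!2, x!3]" using lx n4 by (intro nth_equalityI) (auto simp: nth_Cons' numeral_eq_Suc less_Suc_eq)
      obtain a b e f where xe2: "x = [a, b, e, f]" using xe by blast
      have "[a, b, e, f] \<in> vscale c ` listed_weights 4 i j"
      proof (rule fin4[OF cpos])
        show "i \<in> {1..4}" "j \<in> {1..4}" using assms(2,3) n4 by simp_all
        show "length (filter (\<lambda>v. v \<noteq> 0) [a, b, e, f]) = j" using cnt by (simp only: xe2)
        show "\<forall>k. 1 \<le> k \<and> k < 4 \<and> k \<noteq> i \<longrightarrow> [a, b, e, f] ! (k-1) > [a, b, e, f] ! k" using ineq by (simp only: xe2 n4)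
        show "i \<noteq> 4 \<longrightarrow> f > 0" using lastp xe2 n4 by simp
      qed (use vals[rule_format, of 0] vals[rule_format, of 1] vals[rule_format, of 2] vals[rule_format, of 3] xe2 n4 in simp_all)
      then show ?thesis using xe2 n4 by simp
    qed
  qed
  then obtain y where "y \<in> listed_weights n i j" "x = vscale c y" by blast
  then show ?thesis using cm by blast
qed

end
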